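(* Let $K$ be a field (e.g. $K=\mathbb{C}$), let $r\geqslant 0$ be an integer, and let $\{a_0(n)\}_{n\in\mathbb{Z}},\ldots,\{a_r(n)\}_{n\in\mathbb{Z}}$ be arbitrary sequences of elements of $K$. Consider the set $V$ of all sequences $\{x(n)\}_{n\in\mathbb{Z}}$ of elements of $K$ satisfying \[ a_r(n)x(n+r)+\ldots+a_1(n)x(n+1)+a_0(n)x(n)=0\quad\text{for every } n\in\mathbb{Z}; \] $V$ is a $K$-vector space. Then the following are equivalent: (1) $\dim_K V=\infty$; (2) $V$ contains a lacunary sequence.
   Context: For a sequence $\{a(n)\}_{n\in\mathbb{Z}}$, its support is $\operatorname{supp}(\{a(n)\})=\{i\in\mathbb{Z}\mid a(i)\neq 0\}$. Two elements $i<j$ of the support are called consecutive if there is no $k$ in the support with $i<k<j$. A sequence is called lacunary if the differences $j-i$ between consecutive elements $i<j$ of its support can be arbitrarily large, i.e. for every $N$ there exist consecutive elements $i<j$ of the support with $j-i>N$. *)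

theory Defs
  imports Complex_Main "HOL-Library.Function_Algebras"
begin

definition seq_scale :: "'a::field \<Rightarrow> (int \<Rightarrow> 'a) \<Rightarrow> (int \<Rightarrow> 'a)" where
  "seq_scale c x = (\<lambda>n. c * x n)"

lemma vector_space_seq_scale: "vector_space (seq_scale :: 'a::field \<Rightarrow> _)"
  by unfold_locales (auto simp: seq_scale_def algebra_simps fun_eq_iff)

definition supp_seq :: "(int \<Rightarrow> 'a::zero) \<Rightarrow> int set" where
  "supp_seq x = {i. x i \<noteq> 0}"

definition consecutive :: "int set \<Rightarrow> int \<Rightarrow> int \<Rightarrow> bool" where
  "consecutive S i j \<longleftrightarrow> i \<in> S \<and> j \<in> S \<and> i < j \<and> \<not> (\<exists>k\<in>S. i < k \<and> k < j)"

definition lacunary :: "(int \<Rightarrow> 'a::zero) \<Rightarrow> bool" where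
  "lacunary x \<longleftrightarrow> (\<forall>N::nat. \<exists>i j. consecutive (supp_seq x) i j \<and> j - i > int N)"

definition sol_space :: "nat \<Rightarrow> (nat \<Rightarrow> int \<Rightarrow> 'a::field) \<Rightarrow> (int \<Rightarrow> 'a) set" where
  "sol_space r a = {x. \<forall>n::int. (\<Sum>i\<le>r. a i n * x (n + int i)) = 0}"

definition infinite_dim :: "(int \<Rightarrow> 'a::field) set \<Rightarrow> bool" where
  "infinite_dim V \<longleftrightarrow> \<not> (\<exists>B. finite B \<and> module.span seq_scale B = V)"

end

theory Submission
  imports Defs
begin

interpretation vs: vector_space "seq_scale :: 'a::field \<Rightarrow> (int \<Rightarrow> 'a) \<Rightarrow> (int \<Rightarrow> 'a)"
  by (rule vector_space_seq_scale)

lemma seq_scale_app[simp]: "seq_scale c x n = c * x n"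
  by (simp add: seq_scale_def)

definition trunc_lt :: "int \<Rightarrow> (int \<Rightarrow> 'a::zero) \<Rightarrow> int \<Rightarrow> 'a" where
  "trunc_lt m x = (\<lambda>n. if n < m then x n else 0)"
definition trunc_ge :: "int \<Rightarrow> (int \<Rightarrow> 'a::zero) \<Rightarrow> int \<Rightarrow> 'a" where
  "trunc_ge m x = (\<lambda>n. if m \<le> n then x n else 0)"

lemma sol_subspace: "vs.subspace (sol_space r a)"
  unfolding vs.subspace_def sol_space_def
  by (auto simp: sum.distrib distrib_left sum_distrib_left[symmetric] algebra_simps
      simp flip: sum_distrib_left)

lemma split_lt:
  assumes x: "x \<in> sol_space r a" and z: "\<And>i. i < r \<Longrightarrow> x (m + int i) = 0"
  shows "trunc_lt m x \<in> sol_space r a"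
  unfolding sol_space_def
proof (intro CollectI allI)
  fix n
  show "(\<Sum>i\<le>r. a i n * trunc_lt m x (n + int i)) = 0"
  proof (cases "n < m")
    case True
    have "(\<Sum>i\<le>r. a i n * trunc_lt m x (n + int i)) = (\<Sum>i\<le>r. a i n * x (n + int i))"
    proof (rule sum.cong)
      fix i assume i: "i \<in> {..r}"
      show "a i n * trunc_lt m x (n + int i) = a i n * x (n + int i)"
      proof (cases "n + int i < m")
        case False
        define k where "k = nat (n + int i - m)"
        have k: "n + int i = m + int k" "k < r" using True i False by (auto simp: k_def)
        then show ?thesis using z by (simp add: trunc_lt_def)
      qed (simp add: trunc_lt_def)
    qed simp
    then show ?thesis using x by (simp add: sol_space_def)
  next
    case False
    then show ?thesis by (simp add: trunc_lt_def)
  qed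
qed

lemma split_ge:
  assumes x: "x \<in> sol_space r a" and z: "\<And>i. i < r \<Longrightarrow> x (m + int i) = 0"
  shows "trunc_ge m x \<in> sol_space r a"
  unfolding sol_space_def
proof (intro CollectI allI)
  fix n
  show "(\<Sum>i\<le>r. a i n * trunc_ge m x (n + int i)) = 0"
  proof (cases "m \<le> n")
    case True
    have "(\<Sum>i\<le>r. a i n * trunc_ge m x (n + int i)) = (\<Sum>i\<le>r. a i n * x (n + int i))"
      using True by (intro sum.cong) (auto simp: trunc_ge_def)
    then show ?thesis using x by (simp add: sol_space_def)
  next
    case False
    have "a i n * trunc_ge m x (n + int i) = 0" if i: "i \<in> {..r}" for i
    proof (cases "m \<le> n + int i")
      case True
      define k where "k = nat (n + int i - m)"
      have k: "n + int i = m + int k" "k < r" using True i False by (auto simp: k_def)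
      then show ?thesis using z by (simp add: trunc_ge_def)
    qed (simp add: trunc_ge_def)
    then show ?thesis by (meson sum.neutral)
  qed
qed

lemma trunc_split: "(x::int \<Rightarrow> 'a::monoid_add) = trunc_lt m x + trunc_ge m x"
  by (auto simp: trunc_lt_def trunc_ge_def fun_eq_iff)

lemma inf_dim_nonzero:
  assumes U: "vs.subspace U" and inf: "infinite_dim U"
  shows "\<exists>x\<in>U. x \<noteq> 0"
proof (rule ccontr)
  assume "\<not> ?thesis"
  then have "U = vs.span {}" using vs.subspace_0[OF U] by auto
  then show False using inf unfolding infinite_dim_def by blast
qed

lemma subspace_kill: "vs.subspace U \<Longrightarrow> vs.subspace {x\<in>U. \<forall>i\<in>F. x i = 0}"
  unfolding vs.subspace_def by auto

lemma inf_dim_kill1: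
  assumes U: "vs.subspace U" and inf: "infinite_dim U"
  shows "infinite_dim {x\<in>U. x i = 0}"
proof (rule ccontr)
  assume "\<not> ?thesis"
  then obtain B where B: "finite B" "vs.span B = {x\<in>U. x i = 0}"
    unfolding infinite_dim_def by blast
  show False
  proof (cases "\<forall>x\<in>U. x i = 0")
    case True
    then have "vs.span B = U" using B by auto
    then show False using inf B unfolding infinite_dim_def by blast
  next
    case False
    then obtain y where y: "y \<in> U" "y i \<noteq> 0" by blast
    have BU: "B \<subseteq> U" using B vs.span_superset by blast
    have "vs.span (insert y B) = U"
    proof
      show "vs.span (insert y B) \<subseteq> U" using BU y U by (intro vs.span_minimal) auto
    next
      show "U \<subseteq> vs.span (insert y B)"
      proof
        fix x assume x: "x \<in> U"
        define c where "c = x i / y i"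
        have "x - seq_scale c y \<in> U"
          using x y U by (intro vs.subspace_diff vs.subspace_scale) auto
        moreover have "(x - seq_scale c y) i = 0" using y by (simp add: c_def fun_diff_def)
        ultimately have "x - seq_scale c y \<in> vs.span B" using B by auto
        then have 1: "x - seq_scale c y \<in> vs.span (insert y B)"
          using vs.span_mono[of B "insert y B"] by blast
        have 2: "seq_scale c y \<in> vs.span (insert y B)"
          by (intro vs.span_scale vs.span_superset[THEN subsetD]) auto
        have "x = (x - seq_scale c y) + seq_scale c y" by simp
        then show "x \<in> vs.span (insert y B)" using vs.span_add[OF 1 2] by metis
      qed
    qed
    then show False using inf B unfolding infinite_dim_def by blast
  qed
qed

lemma inf_dim_kill:
  assumes F: "finite F" and U: "vs.subspace U" and inf: "infinite_dim U"
  shows "infinite_dim {x\<in>U. \<forall>i\<in>F. x i = 0}"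
  using F
proof (induction F rule: finite_induct)
  case empty
  then show ?case using inf by simp
next
  case (insert i F)
  have "{x\<in>U. \<forall>j\<in>insert i F. x j = 0} = {x\<in>{x\<in>U. \<forall>j\<in>F. x j = 0}. x i = 0}" by auto
  then show ?case using inf_dim_kill1[OF subspace_kill[OF U] insert.IH] by simp
qed

definition stair :: "(int \<Rightarrow> 'a::field) set \<Rightarrow> int set \<Rightarrow> (int \<Rightarrow> int \<Rightarrow> 'a) \<Rightarrow> bool" where
  "stair U D X \<longleftrightarrow> finite D \<and> (\<forall>p\<in>D. X p \<in> U \<and> X p p \<noteq> 0 \<and> (\<forall>j<p. X p j = 0))"

lemma stair_reduce:
  assumes G: "finite G" and U: "vs.subspace U" and st: "stair U D X"
  shows "\<exists>D' X'. D' \<subseteq> D \<and> card D \<le> card D' + card G \<and> stair U D' X' \<and>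
           (\<forall>p\<in>D'. \<forall>g\<in>G. X' p g = 0)"
  using G
proof (induction G rule: finite_induct)
  case empty
  then show ?case using st by (intro exI[of _ D] exI[of _ X]) auto
next
  case (insert g G)
  then obtain D1 X1 where D1: "D1 \<subseteq> D" "card D \<le> card D1 + card G" "stair U D1 X1"
    "\<forall>p\<in>D1. \<forall>g\<in>G. X1 p g = 0" by blast
  have fD1: "finite D1" using D1(3) by (simp add: stair_def)
  show ?case
  proof (cases "\<forall>p\<in>D1. X1 p g = 0")
    case True
    then show ?thesis using D1 insert.hyps
      by (intro exI[of _ D1] exI[of _ X1]) auto
  next
    case False
    define E where "E = {p\<in>D1. X1 p g \<noteq> 0}"
    have fE: "finite E" "E \<noteq> {}" using fD1 False by (auto simp: E_def)
    define k where "k = Max E"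
    have kE: "k \<in> E" using fE by (simp add: k_def)
    have kmax: "\<And>p. p \<in> E \<Longrightarrow> p \<le> k" using fE by (simp add: k_def)
    have kD1: "k \<in> D1" and kg: "X1 k g \<noteq> 0" using kE by (auto simp: E_def)
    define D2 where "D2 = D1 - {k}"
    define X2 where "X2 = (\<lambda>p. X1 p - seq_scale (X1 p g / X1 k g) (X1 k))"
    have cardD: "card D1 = card D2 + 1" using fD1 kD1
      by (simp add: D2_def card_Diff_singleton) (metis card_0_eq card_gt_0_iff empty_iff One_nat_def Suc_pred)
    have X2low: "X2 p j = X1 p j" if p: "p \<in> D2" and j: "j \<le> p" for p j
    proof (cases "X1 p g = 0")
      case True then show ?thesis by (simp add: X2_def fun_diff_def)
    next
      case False
      then have "p \<in> E" using p by (auto simp: E_def D2_def)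
      then have "p < k" using kmax p by (force simp: D2_def)
      then have "X1 k j = 0" using D1(3) kD1 j by (auto simp: stair_def)
      then show ?thesis by (simp add: X2_def fun_diff_def)
    qed
    have st2: "stair U D2 X2"
      unfolding stair_def
    proof (intro conjI ballI)
      show "finite D2" using fD1 by (simp add: D2_def)
    next
      fix p assume p: "p \<in> D2"
      then have pD1: "p \<in> D1" by (simp add: D2_def)
      show "X2 p \<in> U" unfolding X2_def
        using D1(3) pD1 kD1 U by (intro vs.subspace_diff vs.subspace_scale) (auto simp: stair_def)
      show "X2 p p \<noteq> 0" using X2low[OF p] D1(3) pD1 by (auto simp: stair_def)
      show "\<forall>j<p. X2 p j = 0" using X2low[OF p] D1(3) pD1 by (auto simp: stair_def)
    qed
    have van: "\<forall>p\<in>D2. \<forall>g'\<in>insert g G. X2 p g' = 0"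
    proof (intro ballI)
      fix p g' assume p: "p \<in> D2" and g': "g' \<in> insert g G"
      show "X2 p g' = 0"
      proof (cases "g' = g")
        case True then show ?thesis using kg by (simp add: X2_def fun_diff_def)
      next
        case False
        then have "g' \<in> G" using g' by simp
        then have "X1 p g' = 0" "X1 k g' = 0" using D1(4) p kD1 by (auto simp: D2_def)
        then show ?thesis by (simp add: X2_def fun_diff_def)
      qed
    qed
    show ?thesis
      using D1 cardD st2 van insert.hyps
      by (intro exI[of _ D2] exI[of _ X2]) (auto simp: D2_def)
  qed
qed

lemma stair_build:
  assumes V: "vs.subspace V" and inf: "\<forall>Q\<ge>M. infinite_dim {x\<in>V. \<forall>i<Q. x i = 0}"
  shows "\<exists>D X Q. stair {x\<in>V. \<forall>i<M. x i = 0} D X \<and> card D = n \<and> D \<subseteq> {M..<Q} \<and> M \<le> Q"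
proof (induction n)
  case 0
  show ?case by (intro exI[of _ "{}"] exI[of _ "\<lambda>_. 0"] exI[of _ M]) (simp add: stair_def)
next
  case (Suc n)
  then obtain D X Q where DX: "stair {x\<in>V. \<forall>i<M. x i = 0} D X" "card D = n" "D \<subseteq> {M..<Q}" "M \<le> Q"
    by blast
  have sub: "vs.subspace {x\<in>V. \<forall>i<Q. x i = 0}" using V unfolding vs.subspace_def by auto
  obtain y where y: "y \<in> {x\<in>V. \<forall>i<Q. x i = 0}" "y \<noteq> 0"
    using inf_dim_nonzero[OF sub] inf DX(4) by blast
  then obtain q0 where q0: "y q0 \<noteq> 0" by (auto simp: fun_eq_iff)
  define E where "E = {j\<in>{Q..q0}. y j \<noteq> 0}"
  have q0Q: "Q \<le> q0" using y q0 by (metis (mono_tags, lifting) mem_Collect_eq not_less)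
  have fE1: "finite E" unfolding E_def by (rule finite_subset[of _ "{Q..q0}"]) auto
  have fE2: "E \<noteq> {}" using q0 q0Q by (auto simp: E_def)
  note fE = fE1 fE2
  define p where "p = Min E"
  have pE: "p \<in> E" using fE by (simp add: p_def)
  have pmin: "\<And>j. j \<in> E \<Longrightarrow> p \<le> j" using fE by (simp add: p_def)
  have yp: "y p \<noteq> 0" "Q \<le> p" "p \<le> q0" using pE by (auto simp: E_def)
  have ylow: "y j = 0" if "j < p" for j
  proof (cases "j < Q")
    case True then show ?thesis using y by auto
  next
    case False
    show ?thesis
    proof (rule ccontr)
      assume "y j \<noteq> 0"
      then have "j \<in> E" using False that yp by (auto simp: E_def)
      then show False using pmin that by force
    qed
  qed
  have pD: "p \<notin> D" using DX(3) yp by auto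
  have fD: "finite D" using DX(1) by (simp add: stair_def)
  have st: "stair {x\<in>V. \<forall>i<M. x i = 0} (insert p D) (X(p := y))"
    using DX(1) pD y yp ylow DX(4) unfolding stair_def by auto
  show ?case
    apply (intro exI[of _ "insert p D"] exI[of _ "X(p := y)"] exI[of _ "p+1"] conjI st)
    using pD fD DX yp by auto
qed

lemma fin_sol:
  assumes inf: "\<forall>Q\<ge>M. infinite_dim {x\<in>sol_space r a. \<forall>i<Q. x i = 0}"
  shows "\<exists>y\<in>sol_space r a. \<exists>lo hi. M \<le> lo \<and> lo \<le> hi \<and> y lo \<noteq> 0 \<and> y hi \<noteq> 0 \<and>
            (\<forall>j. y j \<noteq> 0 \<longrightarrow> lo \<le> j \<and> j \<le> hi)"
proof -
  define R where "R = {x\<in>sol_space r a. \<forall>i<M. x i = 0}"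
  have subR: "vs.subspace R" using sol_subspace[of r a] unfolding R_def vs.subspace_def by auto
  obtain D X Q where DX: "stair R D X" "card D = Suc r" "D \<subseteq> {M..<Q}" "M \<le> Q"
    using stair_build[OF sol_subspace inf, of "Suc r"] unfolding R_def by blast
  define G where "G = {Q..<Q + int r}"
  have cG: "finite G" "card G = r" by (auto simp: G_def)
  obtain D' X' where D': "D' \<subseteq> D" "card D \<le> card D' + card G" "stair R D' X'"
    "\<forall>p\<in>D'. \<forall>g\<in>G. X' p g = 0"
    using stair_reduce[OF cG(1) subR DX(1)] by blast
  have "D' \<noteq> {}" using D'(2) DX(2) cG(2) by auto
  then obtain p where p: "p \<in> D'" by blast
  define x where "x = X' p"
  have x: "x \<in> R" "x p \<noteq> 0" "\<forall>g\<in>G. x g = 0" using D'(3,4) p by (auto simp: stair_def x_def)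
  have pMQ: "M \<le> p" "p < Q" using p D'(1) DX(3) by auto
  define y where "y = trunc_lt Q x"
  have ysol: "y \<in> sol_space r a" unfolding y_def
    using x(1,3) by (intro split_lt) (auto simp: R_def G_def)
  have ysupp: "y j \<noteq> 0 \<Longrightarrow> M \<le> j \<and> j < Q" for j
    using x(1) by (auto simp: y_def trunc_lt_def R_def split: if_splits) (meson not_le)
  have yp: "y p \<noteq> 0" using x(2) pMQ by (simp add: y_def trunc_lt_def)
  define S where "S = {j\<in>{M..<Q}. y j \<noteq> 0}"
  have fS: "finite S" unfolding S_def by (rule finite_subset[of _ "{M..<Q}"]) auto
  have pS: "p \<in> S" using yp pMQ by (simp add: S_def)
  have Sne: "S \<noteq> {}" using pS by blast
  define lo where "lo = Min S"
  define hi where "hi = Max S"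
  have loS: "lo \<in> S" and hiS: "hi \<in> S" using fS Sne by (simp_all add: lo_def hi_def)
  have bnd: "lo \<le> j \<and> j \<le> hi" if "y j \<noteq> 0" for j
  proof -
    have "j \<in> S" using that ysupp[OF that] by (simp add: S_def)
    then show ?thesis using fS by (simp add: lo_def hi_def)
  qed
  show ?thesis
    using ysol loS hiS bnd by (intro bexI[of _ y] exI[of _ lo] exI[of _ hi]) (auto simp: S_def)
qed

lemma lac_from_pieces:
  fixes V :: "(int \<Rightarrow> 'a::field) set" and r :: nat and a :: "nat \<Rightarrow> int \<Rightarrow> 'a"
  defines "V \<equiv> sol_space r a"
  assumes h: "\<forall>M\<ge>m. \<exists>y\<in>V. \<exists>lo hi. M \<le> lo \<and> lo \<le> hi \<and> y lo \<noteq> 0 \<and> y hi \<noteq> 0 \<and>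
            (\<forall>j. y j \<noteq> 0 \<longrightarrow> lo \<le> j \<and> j \<le> hi)"
  shows "\<exists>x\<in>V. lacunary x"
proof -
  define P where "P = (\<lambda>M (t :: (int \<Rightarrow> 'a) \<times> int \<times> int). fst t \<in> V \<and> M \<le> fst (snd t) \<and> fst (snd t) \<le> snd (snd t)
     \<and> fst t (fst (snd t)) \<noteq> 0 \<and> fst t (snd (snd t)) \<noteq> 0 \<and>
     (\<forall>j. fst t j \<noteq> 0 \<longrightarrow> fst (snd t) \<le> j \<and> j \<le> snd (snd t)))"
  define nxt where "nxt = (\<lambda>M. SOME t. P M t)"
  have nxtP: "P M (nxt M)" if "m \<le> M" for M
  proof -
    have "\<exists>t. P M t" using h that unfolding P_def by fastforce
    then show ?thesis unfolding nxt_def by (rule someI_ex)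
  qed
  define pc where "pc = rec_nat (nxt m) (\<lambda>k t. nxt (snd (snd t) + int k + 2))"
  have pc0: "pc 0 = nxt m" and pcS: "\<And>k. pc (Suc k) = nxt (snd (snd (pc k)) + int k + 2)"
    by (simp_all add: pc_def)
  define Y where "Y = (\<lambda>k. fst (pc k))"
  define L where "L = (\<lambda>k. fst (snd (pc k)))"
  define H where "H = (\<lambda>k. snd (snd (pc k)))"
  have props: "m + int k \<le> L k \<and> Y k \<in> V \<and> L k \<le> H k \<and> Y k (L k) \<noteq> 0 \<and> Y k (H k) \<noteq> 0 \<and>
     (\<forall>j. Y k j \<noteq> 0 \<longrightarrow> L k \<le> j \<and> j \<le> H k)" for k
  proof (induction k)
    case 0
    then show ?case using nxtP[of m] by (simp add: pc0 P_def Y_def L_def H_def)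
  next
    case (Suc k)
    have "m \<le> H k + int k + 2" using Suc by auto
    from nxtP[OF this] Suc show ?case by (simp add: pcS P_def Y_def L_def H_def)
  qed
  have gap: "H k + int k + 2 \<le> L (Suc k)" for k
  proof -
    have "m \<le> H k + int k + 2" using props[of k] by auto
    from nxtP[OF this] show ?thesis by (simp add: pcS P_def L_def H_def)
  qed
  have Lmono: "L k \<le> L l" if "k \<le> l" for k l
  proof -
    have "L n \<le> L (Suc n)" for n
    proof -
      have "L n \<le> H n" using props[of n] by blast
      then show ?thesis using gap[of n] by linarith
    qed
    then show ?thesis using lift_Suc_mono_le[of L] that by blast
  qed
  have HL: "H k < L l" if "k < l" for k l
    using gap[of k] Lmono[of "Suc k" l] that by auto
  have Hmono: "H k \<le> H l" if "k \<le> l" for k l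
    using HL[of k l] props[of l] that by (cases "k = l") auto
  have Yz: "Y k n = 0" if "n < L k \<or> H k < n" for k n
    using props[of k] that by force
  define x where "x = (\<lambda>n. \<Sum>k<Suc (nat (n - m)). Y k n)"
  have xN: "x n = (\<Sum>k<N. Y k n)" if "nat (n - m) < N" for n N
    unfolding x_def
  proof (rule sum.mono_neutral_left)
    show "\<forall>i\<in>{..<N} - {..<Suc (nat (n - m))}. Y i n = 0"
    proof
      fix i assume "i \<in> {..<N} - {..<Suc (nat (n - m))}"
      then have "n < m + int i" by auto
      then show "Y i n = 0" using props[of i] Yz[of n i] by auto
    qed
  qed (use that in auto)
  have xV: "x \<in> V"
    unfolding V_def sol_space_def
  proof (intro CollectI allI)
    fix n
    define N where "N = Suc (nat (n + int r - m))"
    have "(\<Sum>i\<le>r. a i n * x (n + int i)) = (\<Sum>i\<le>r. a i n * (\<Sum>k<N. Y k (n + int i)))"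
      by (intro sum.cong refl arg_cong2[where f="(*)"] xN) (auto simp: N_def)
    also have "\<dots> = (\<Sum>k<N. \<Sum>i\<le>r. a i n * Y k (n + int i))"
      by (simp add: sum_distrib_left sum.swap[of _ "{..r}"])
    also have "\<dots> = 0"
    proof (rule sum.neutral, rule ballI)
      fix k
      have "Y k \<in> sol_space r a" using props[of k] by (simp add: V_def)
      then show "(\<Sum>i\<le>r. a i n * Y k (n + int i)) = 0" by (simp add: sol_space_def)
    qed
    finally show "(\<Sum>i\<le>r. a i n * x (n + int i)) = 0" .
  qed
  have xin: "x t = Y k t" if "L k \<le> t" "t \<le> H k" for k t
  proof -
    define N where "N = max (Suc k) (Suc (nat (t - m)))"
    have "x t = (\<Sum>l<N. Y l t)" by (rule xN) (simp add: N_def)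
    also have "\<dots> = (\<Sum>l\<in>{k}. Y l t)"
    proof (rule sum.mono_neutral_right)
      show "\<forall>i\<in>{..<N} - {k}. Y i t = 0"
      proof
        fix i assume i: "i \<in> {..<N} - {k}"
        show "Y i t = 0"
        proof (cases "i < k")
          case True then show ?thesis using HL[OF True] that by (intro Yz) auto
        next
          case False
          then have "k < i" using i by auto
          then show ?thesis using HL[of k i] that by (intro Yz) auto
        qed
      qed
    qed (auto simp: N_def)
    finally show ?thesis by simp
  qed
  have xout: "x t = 0" if "H k < t" "t < L (Suc k)" for k t
    unfolding x_def
  proof (rule sum.neutral, rule ballI)
    fix l
    show "Y l t = 0"
    proof (cases "l \<le> k")
      case True then show ?thesis using Hmono[OF True] that by (intro Yz) auto
    next
      case False
      then have "Suc k \<le> l" by auto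
      then show ?thesis using Lmono[of "Suc k" l] that by (intro Yz) auto
    qed
  qed
  have "lacunary x"
    unfolding lacunary_def
  proof
    fix N :: nat
    have c: "consecutive (supp_seq x) (H N) (L (Suc N))"
      unfolding consecutive_def supp_seq_def
    proof (intro conjI)
      show "H N \<in> {i. x i \<noteq> 0}" using xin[of N "H N"] props[of N] by auto
      show "L (Suc N) \<in> {i. x i \<noteq> 0}" using xin[of "Suc N" "L (Suc N)"] props[of "Suc N"] by auto
      show "H N < L (Suc N)" using HL[of N "Suc N"] by simp
      show "\<not> (\<exists>k\<in>{i. x i \<noteq> 0}. H N < k \<and> k < L (Suc N))" using xout[of N] by auto
    qed
    show "\<exists>i j. consecutive (supp_seq x) i j \<and> int N < j - i"
      using c gap[of N] by (intro exI[of _ "H N"] exI[of _ "L (Suc N)"]) auto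
  qed
  then show ?thesis using xV by blast
qed

lemma right_case:
  assumes inf: "infinite_dim {x\<in>sol_space r a. \<forall>i<m. x i = 0}"
  shows "\<exists>x\<in>sol_space r a. lacunary x"
proof (rule lac_from_pieces, intro allI impI)
  fix M assume M: "m \<le> M"
  have sub: "vs.subspace {x\<in>sol_space r a. \<forall>i<m. x i = 0}"
    using sol_subspace[of r a] unfolding vs.subspace_def by auto
  have "infinite_dim {x\<in>sol_space r a. \<forall>i<Q. x i = 0}" if Q: "M \<le> Q" for Q
  proof -
    have "{x\<in>sol_space r a. \<forall>i<Q. x i = 0} =
          {x\<in>{x\<in>sol_space r a. \<forall>i<m. x i = 0}. \<forall>i\<in>{m..<Q}. x i = 0}"
      using M Q by auto
    then show ?thesis using inf_dim_kill[OF _ sub inf, of "{m..<Q}"] by simp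
  qed
  then show "\<exists>y\<in>sol_space r a. \<exists>lo hi. M \<le> lo \<and> lo \<le> hi \<and> y lo \<noteq> 0 \<and> y hi \<noteq> 0 \<and>
            (\<forall>j. y j \<noteq> 0 \<longrightarrow> lo \<le> j \<and> j \<le> hi)"
    by (intro fin_sol) auto
qed

definition reflseq :: "(int \<Rightarrow> 'a) \<Rightarrow> int \<Rightarrow> 'a" where
  "reflseq x = (\<lambda>n. x (- n))"

definition arefl :: "nat \<Rightarrow> (nat \<Rightarrow> int \<Rightarrow> 'a) \<Rightarrow> nat \<Rightarrow> int \<Rightarrow> 'a" where
  "arefl r a = (\<lambda>i n. a (r - i) (- n - int r))"

lemma reflseq_reflseq[simp]: "reflseq (reflseq x) = x"
  by (simp add: reflseq_def)

lemma refl_sum: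
  fixes a :: "nat \<Rightarrow> int \<Rightarrow> 'a::field"
  shows "(\<Sum>i\<le>r. arefl r a i n * reflseq x (n + int i)) =
         (\<Sum>j\<le>r. a j (- n - int r) * x (- n - int r + int j))"
  unfolding arefl_def reflseq_def
  by (rule sum.reindex_bij_witness[of _ "\<lambda>i. r - i" "\<lambda>i. r - i"]) (auto simp: of_nat_diff)

lemma refl_sol:
  fixes a :: "nat \<Rightarrow> int \<Rightarrow> 'a::field"
  shows "x \<in> sol_space r a \<longleftrightarrow> reflseq x \<in> sol_space r (arefl r a)"
proof
  assume "x \<in> sol_space r a"
  then show "reflseq x \<in> sol_space r (arefl r a)"
    unfolding sol_space_def by (simp add: refl_sum)
next
  assume h: "reflseq x \<in> sol_space r (arefl r a)"
  show "x \<in> sol_space r a"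
    unfolding sol_space_def
  proof (intro CollectI allI)
    fix n
    have "(\<Sum>i\<le>r. arefl r a i (- n - int r) * reflseq x (- n - int r + int i)) = 0"
      using h unfolding sol_space_def by blast
    then show "(\<Sum>i\<le>r. a i n * x (n + int i)) = 0" by (simp add: refl_sum)
  qed
qed

lemma consecutive_unique: "consecutive S i j \<Longrightarrow> consecutive S i j' \<Longrightarrow> j = j'"
  unfolding consecutive_def by (meson linorder_neqE)

lemma lacunary_refl:
  assumes "lacunary (y :: int \<Rightarrow> 'a::zero)" shows "lacunary (reflseq y)"
  unfolding lacunary_def
proof
  fix N :: nat
  obtain i j where ij: "consecutive (supp_seq y) i j" "j - i > int N"
    using assms unfolding lacunary_def by blast
  have "consecutive (supp_seq (reflseq y)) (- j) (- i)"
    using ij(1) unfolding consecutive_def supp_seq_def reflseq_def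
    by (auto simp: minus_less_iff) (metis minus_less_iff neg_less_iff_less)
  then show "\<exists>i j. consecutive (supp_seq (reflseq y)) i j \<and> int N < j - i"
    using ij(2) by (intro exI[of _ "-j"] exI[of _ "-i"]) auto
qed

lemma left_case:
  fixes a :: "nat \<Rightarrow> int \<Rightarrow> 'a::field"
  assumes inf: "infinite_dim {x\<in>sol_space r a. \<forall>i\<ge>0. x i = 0}"
  shows "\<exists>x\<in>sol_space r a. lacunary x"
proof -
  define L where "L = {x\<in>sol_space r a. \<forall>i\<ge>0. x i = 0}"
  define R' where "R' = {y\<in>sol_space r (arefl r a). \<forall>i<1. y i = 0}"
  have LR: "x \<in> L \<longleftrightarrow> reflseq x \<in> R'" for x
  proof -
    have e: "(\<forall>i::int. i \<ge> 0 \<longrightarrow> x i = 0) \<longleftrightarrow> (\<forall>i::int. i < 1 \<longrightarrow> x (-i) = 0)"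
    proof (intro iffI allI impI)
      fix i :: int assume "\<forall>i\<ge>0. x i = 0" "i < 1"
      then show "x (-i) = 0" by simp
    next
      fix i :: int assume h: "\<forall>i<1. x (-i) = 0" and "i \<ge> 0"
      then have "x (-(-i)) = 0" by (intro h[rule_format]) simp
      then show "x i = 0" by simp
    qed
    show ?thesis unfolding L_def R'_def using refl_sol[of x r a] e
      by (simp add: reflseq_def)
  qed
  have subL: "vs.subspace L" using sol_subspace[of r a] unfolding L_def vs.subspace_def by auto
  have "infinite_dim R'"
    unfolding infinite_dim_def
  proof
    assume "\<exists>B. finite B \<and> vs.span B = R'"
    then obtain B where B: "finite B" "vs.span B = R'" by blast
    have sub2: "vs.subspace {z. reflseq z \<in> vs.span (reflseq ` B)}"
      unfolding vs.subspace_def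
    proof (intro conjI allI ballI)
      show "0 \<in> {z. reflseq z \<in> vs.span (reflseq ` B)}"
        using vs.span_zero by (simp add: reflseq_def zero_fun_def)
    next
      fix x y assume "x \<in> {z. reflseq z \<in> vs.span (reflseq ` B)}" "y \<in> {z. reflseq z \<in> vs.span (reflseq ` B)}"
      then show "x + y \<in> {z. reflseq z \<in> vs.span (reflseq ` B)}"
        using vs.span_add[of "reflseq x" "reflseq ` B" "reflseq y"]
        by (simp add: reflseq_def plus_fun_def)
    next
      fix c and x :: "int \<Rightarrow> 'a" assume "x \<in> {z. reflseq z \<in> vs.span (reflseq ` B)}"
      then show "seq_scale c x \<in> {z. reflseq z \<in> vs.span (reflseq ` B)}"
        using vs.span_scale[of "reflseq x" "reflseq ` B" c]
        by (simp add: reflseq_def seq_scale_def)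
    qed
    have spB: "vs.span B \<subseteq> {z. reflseq z \<in> vs.span (reflseq ` B)}"
      by (rule vs.span_minimal[OF _ sub2]) (auto intro: vs.span_superset[THEN subsetD])
    have "vs.span (reflseq ` B) = L"
    proof
      show "vs.span (reflseq ` B) \<subseteq> L"
      proof (rule vs.span_minimal[OF _ subL])
        show "reflseq ` B \<subseteq> L" using B vs.span_superset[of B] LR by auto
      qed
    next
      show "L \<subseteq> vs.span (reflseq ` B)"
      proof
        fix x assume "x \<in> L"
        then have "reflseq x \<in> vs.span B" using LR B by auto
        then show "x \<in> vs.span (reflseq ` B)" using spB by auto
      qed
    qed
    then show False using inf B unfolding infinite_dim_def L_def by blast
  qed
  then obtain y where y: "y \<in> sol_space r (arefl r a)" "lacunary y"
    using right_case[of r "arefl r a" 1] unfolding R'_def by blast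
  have "reflseq y \<in> sol_space r a" using y(1) refl_sol[of "reflseq y" r a] by simp
  then show ?thesis using lacunary_refl[OF y(2)] by blast
qed

declare seq_scale_app[simp del]

lemma trunc_indep:
  fixes x :: "int \<Rightarrow> 'a::field"
  assumes "finite I"
  shows "(\<forall>i\<in>I. x i \<noteq> 0) \<longrightarrow> vs.independent ((\<lambda>i. trunc_lt (i+1) x) ` I) \<and>
           card ((\<lambda>i. trunc_lt (i+1) x) ` I) = card I"
  using assms
proof (induction I rule: finite_linorder_max_induct)
  case empty
  show ?case by (simp del: seq_scale_app add: vs.independent_empty)
next
  case (insert b A)
  show ?case
  proof
    assume nz: "\<forall>i\<in>insert b A. x i \<noteq> 0"
    define f where "f = (\<lambda>i. trunc_lt (i+1) x)"
    have IH: "vs.independent (f ` A)" "card (f ` A) = card A"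
      using insert.IH nz by (auto simp: f_def)
    have sub: "vs.subspace {z :: int \<Rightarrow> 'a. z b = 0}"
      unfolding vs.subspace_def by (auto simp: seq_scale_def)
    have "f ` A \<subseteq> {z. z b = 0}" using insert.hyps(2) by (auto simp: f_def trunc_lt_def)
    then have sp: "vs.span (f ` A) \<subseteq> {z. z b = 0}" by (rule vs.span_minimal[OF _ sub])
    have fb: "f b b \<noteq> 0" using nz by (simp add: f_def trunc_lt_def)
    then have nsp: "f b \<notin> vs.span (f ` A)" using sp by auto
    have ind: "vs.independent (insert (f b) (f ` A))" by (rule vs.independent_insertI[OF nsp IH(1)])
    have "f b \<notin> f ` A" using nsp vs.span_superset[of "f ` A"] by auto
    moreover have "b \<notin> A" using insert.hyps(2) by auto
    ultimately have "card (insert (f b) (f ` A)) = card (insert b A)"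
      using IH(2) insert.hyps(1) by simp
    then show "vs.independent ((\<lambda>i. trunc_lt (i+1) x) ` insert b A) \<and>
           card ((\<lambda>i. trunc_lt (i+1) x) ` insert b A) = card (insert b A)"
      using ind by (simp add: f_def)
  qed
qed

declare seq_scale_app[simp]

lemma lac_inf:
  fixes a :: "nat \<Rightarrow> int \<Rightarrow> 'a::field"
  assumes xV: "x \<in> sol_space r a" and lac: "lacunary x"
  shows "infinite_dim (sol_space r a)"
proof -
  define c where "c = (\<lambda>N::nat. SOME p. consecutive (supp_seq x) (fst p) (snd p) \<and> snd p - fst p > int N)"
  have cP: "consecutive (supp_seq x) (fst (c N)) (snd (c N)) \<and> snd (c N) - fst (c N) > int N" for N
  proof -
    have "\<exists>p. consecutive (supp_seq x) (fst p) (snd p) \<and> snd p - fst p > int N"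
      using lac unfolding lacunary_def by fastforce
    then show ?thesis unfolding c_def by (rule someI_ex)
  qed
  define g where "g = rec_nat (c r) (\<lambda>k p. c (nat (snd p - fst p)))"
  define gap where "gap = (\<lambda>k. snd (g k) - fst (g k))"
  have g0: "g 0 = c r" and gS: "\<And>k. g (Suc k) = c (nat (gap k))"
    by (simp_all add: g_def gap_def)
  have gc: "consecutive (supp_seq x) (fst (g k)) (snd (g k)) \<and> gap k > int r" for k
  proof (induction k)
    case 0 then show ?case using cP[of r] by (simp add: g0 gap_def)
  next
    case (Suc k)
    then show ?case using cP[of "nat (gap k)"] by (simp add: gS gap_def)
  qed
  have gapS: "gap k < gap (Suc k)" for k
    using cP[of "nat (gap k)"] gc[of k] by (simp add: gS gap_def)
  have gapmono: "gap k < gap l" if "k < l" for k l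
    using lift_Suc_mono_less[of gap, OF gapS that] .
  define i where "i = (\<lambda>k. fst (g k))"
  have inj: "inj i"
  proof (rule injI)
    fix k l assume "i k = i l"
    then have "snd (g k) = snd (g l)" using gc[of k] gc[of l] consecutive_unique unfolding i_def by metis
    then have "gap k = gap l" using \<open>i k = i l\<close> by (simp add: gap_def i_def)
    then show "k = l" using gapmono by (metis less_irrefl linorder_neqE_nat)
  qed
  have xi: "x (i k) \<noteq> 0" for k using gc[of k] by (simp add: consecutive_def supp_seq_def i_def)
  have inV: "trunc_lt (i k + 1) x \<in> sol_space r a" for k
  proof (rule split_lt[OF xV])
    fix t assume t: "t < r"
    have c: "consecutive (supp_seq x) (i k) (snd (g k))" "gap k > int r" using gc[of k] by (auto simp: i_def)
    have "i k < i k + 1 + int t" "i k + 1 + int t < snd (g k)" using t c(2) by (auto simp: gap_def i_def)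
    moreover have "\<forall>k'. i k < k' \<and> k' < snd (g k) \<longrightarrow> x k' = 0"
      using c(1) unfolding consecutive_def supp_seq_def by auto
    ultimately show "x (i k + 1 + int t) = 0" by blast
  qed
  show ?thesis
    unfolding infinite_dim_def
  proof
    assume "\<exists>B. finite B \<and> vs.span B = sol_space r a"
    then obtain B where B: "finite B" "vs.span B = sol_space r a" by blast
    define I where "I = i ` {..<Suc (card B)}"
    have cI: "finite I" "card I = Suc (card B)"
      using inj by (auto simp: I_def card_image inj_on_subset)
    have nzI: "\<forall>j\<in>I. x j \<noteq> 0" using xi by (auto simp: I_def)
    define T where "T = (\<lambda>j. trunc_lt (j+1) x) ` I"
    have T: "vs.independent T" "card T = Suc (card B)"
      using trunc_indep[OF cI(1), of x] nzI cI(2) by (auto simp: T_def)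
    have "T \<subseteq> vs.span B" using B inV by (auto simp: T_def I_def)
    then have "card T \<le> card B" using vs.independent_span_bound[OF B(1) T(1)] by blast
    then show False using T(2) by simp
  qed
qed

theorem theorem1:
  fixes r :: nat and a :: "nat \<Rightarrow> int \<Rightarrow> 'a::field"
  shows "infinite_dim (sol_space r a) \<longleftrightarrow> (\<exists>x\<in>sol_space r a. lacunary x)"
proof
  assume inf: "infinite_dim (sol_space r a)"
  show "\<exists>x\<in>sol_space r a. lacunary x"
  proof (rule ccontr)
    assume nl: "\<not> ?thesis"
    define V0 where "V0 = {x\<in>sol_space r a. \<forall>i\<in>{0..<int r}. x i = 0}"
    have inf0: "infinite_dim V0" unfolding V0_def by (rule inf_dim_kill[OF _ sol_subspace inf]) simp
    have sub0: "vs.subspace V0" unfolding V0_def by (rule subspace_kill[OF sol_subspace])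
    define L where "L = {x\<in>sol_space r a. \<forall>i\<ge>0. x i = 0}"
    define R where "R = {x\<in>sol_space r a. \<forall>i<int r. x i = 0}"
    have "\<not> infinite_dim L" using left_case[of r a] nl by (auto simp: L_def)
    then obtain BL where BL: "finite BL" "vs.span BL = L" unfolding infinite_dim_def by blast
    have "\<not> infinite_dim R" using right_case[of r a "int r"] nl by (auto simp: R_def)
    then obtain BR where BR: "finite BR" "vs.span BR = R" unfolding infinite_dim_def by blast
    have LV0: "L \<subseteq> V0" by (auto simp: L_def V0_def)
    have RV0: "R \<subseteq> V0" by (auto simp: R_def V0_def)
    have "vs.span (BL \<union> BR) = V0"
    proof
      show "vs.span (BL \<union> BR) \<subseteq> V0"
        using BL BR LV0 RV0 vs.span_superset[of BL] vs.span_superset[of BR]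
        by (intro vs.span_minimal[OF _ sub0]) auto
    next
      show "V0 \<subseteq> vs.span (BL \<union> BR)"
      proof
        fix x assume x: "x \<in> V0"
        have xs: "x \<in> sol_space r a" and z: "\<And>i. i < r \<Longrightarrow> x (0 + int i) = 0"
          using x by (auto simp: V0_def)
        have "trunc_lt 0 x \<in> L" using split_lt[OF xs z] by (auto simp: L_def trunc_lt_def)
        then have 1: "trunc_lt 0 x \<in> vs.span (BL \<union> BR)"
          using BL vs.span_mono[of BL "BL \<union> BR"] by auto
        have "trunc_ge 0 x \<in> R" using split_ge[OF xs z] x
          by (auto simp: R_def trunc_ge_def V0_def)
        then have 2: "trunc_ge 0 x \<in> vs.span (BL \<union> BR)"
          using BR vs.span_mono[of BR "BL \<union> BR"] by auto
        show "x \<in> vs.span (BL \<union> BR)"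
          using vs.span_add[OF 1 2] trunc_split[of x 0] by simp
      qed
    qed
    then show False using inf0 BL(1) BR(1) unfolding infinite_dim_def by blast
  qed
next
  assume "\<exists>x\<in>sol_space r a. lacunary x"
  then show "infinite_dim (sol_space r a)" using lac_inf by blast
qed

end
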